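(* Let $R$ be a ring with unity and involution $*$, let $a\in R$ and let $m$ be a nonnegative integer. Then $a$ is left dual pseudo core invertible if and only if $a^k$ is left dual $a^m$-core invertible for some positive integer $k$. In this case, if $x$ is a left dual $a^m$-core inverse of $a^k$, then $xa^{k+m-1}$ is a left dual pseudo core inverse of $a$; and if $y\in R$ satisfies $a^kya=a^k$, $(ya)^*=ya$ and $y^2a=y$, then $y^{k+m}$ is a left dual $a^m$-core inverse of $a^k$.
   Context: Here $a^0=1$. An element $a$ is left dual pseudo core invertible if there exist $y\in R$ and a positive integer $k$ such that $a^kya=a^k$, $(ya)^*=ya$ and $y^2a=y$; such $y$ is a left dual pseudo core inverse of $a$. For $u,v\in R$, $u$ is left dual $v$-core invertible if there exists $x\in R$ with $uxvu=u$, $(xvu)^*=xvu$ and $x^2vu=x$; such $x$ is a left dual $v$-core inverse of $u$. *)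

theory Defs
  imports Main
begin

class ring_1_inv = ring_1 +
  fixes invol :: "'a \<Rightarrow> 'a" ("_\<^sup>\<star>" [1000] 999)
  assumes invol_add: "(a + b)\<^sup>\<star> = a\<^sup>\<star> + b\<^sup>\<star>"
    and invol_mult: "(a * b)\<^sup>\<star> = b\<^sup>\<star> * a\<^sup>\<star>"
    and invol_invol: "(a\<^sup>\<star>)\<^sup>\<star> = a"

definition ldpc_inverse :: "'a::ring_1_inv \<Rightarrow> 'a \<Rightarrow> bool" where
  "ldpc_inverse a y \<longleftrightarrow>
     (\<exists>k::nat. k > 0 \<and> a ^ k * y * a = a ^ k \<and> (y * a)\<^sup>\<star> = y * a \<and> y ^ 2 * a = y)"

definition ldpc_invertible :: "'a::ring_1_inv \<Rightarrow> bool" where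
  "ldpc_invertible a \<longleftrightarrow> (\<exists>y. ldpc_inverse a y)"

definition ldvcore_inverse :: "'a::ring_1_inv \<Rightarrow> 'a \<Rightarrow> 'a \<Rightarrow> bool" where
  "ldvcore_inverse u v x \<longleftrightarrow>
     u * x * v * u = u \<and> (x * v * u)\<^sup>\<star> = x * v * u \<and> x ^ 2 * v * u = x"

definition ldvcore_invertible :: "'a::ring_1_inv \<Rightarrow> 'a \<Rightarrow> bool" where
  "ldvcore_invertible u v \<longleftrightarrow> (\<exists>x. ldvcore_inverse u v x)"

end

theory Submission
  imports Defs
begin

lemma pw1:
  fixes y a :: "'a::ring_1"
  assumes "y ^ 2 * a = y"
  shows "y ^ Suc n * a ^ Suc n = y * a"
proof (induction n)
  case 0 then show ?case by simp
next
  case (Suc n)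
  have "y ^ Suc (Suc n) * a ^ Suc (Suc n) = y ^ n * (y ^ 2 * a) * a ^ Suc n"
  proof -
    have "y ^ Suc (Suc n) = y ^ n * y ^ 2" by (simp add: power_add[symmetric])
    moreover have "a ^ Suc (Suc n) = a * a ^ Suc n" by simp
    ultimately show ?thesis by (simp add: mult.assoc)
  qed
  also have "\<dots> = y ^ Suc n * a ^ Suc n" using assms by (simp add: power_commutes)
  finally show ?case using Suc by simp
qed

lemma pw2:
  fixes y a :: "'a::ring_1"
  assumes "y ^ 2 * a = y"
  shows "y ^ Suc n * (y * a) = y ^ Suc n"
proof -
  have "y ^ Suc n = y ^ n * y" by (simp add: power_commutes)
  then have "y ^ Suc n * (y * a) = y ^ n * (y ^ 2 * a)"
    by (simp add: power2_eq_square mult.assoc)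
  then show ?thesis using assms by (simp add: power_commutes)
qed

lemma part3:
  fixes a y :: "'a::ring_1_inv"
  assumes k: "k > 0" and h1: "a ^ k * y * a = a ^ k" and h2: "(y * a)\<^sup>\<star> = y * a"
    and h3: "y ^ 2 * a = y"
  shows "ldvcore_inverse (a ^ k) (a ^ m) (y ^ (k + m))"
proof -
  obtain n where n: "k + m = Suc n" using k by (cases "k + m") auto
  have e: "y ^ (k + m) * a ^ m * a ^ k = y * a"
    using pw1[OF h3, of n] n by (simp add: mult.assoc power_add[symmetric] add.commute)
  have 1: "a ^ k * y ^ (k + m) * a ^ m * a ^ k = a ^ k"
    using e h1 by (simp add: mult.assoc)
  have 2: "(y ^ (k + m))\<^sup>2 * a ^ m * a ^ k = y ^ (k + m)"
    using e pw2[OF h3, of n] n by (simp add: power2_eq_square mult.assoc)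
  show ?thesis unfolding ldvcore_inverse_def using 1 2 e h2 by simp
qed

lemma part2:
  fixes a x :: "'a::ring_1_inv"
  assumes k: "k > 0" and h: "ldvcore_inverse (a ^ k) (a ^ m) x"
  shows "ldpc_inverse a (x * a ^ (k + m - 1))"
proof -
  have h1: "a ^ k * x * a ^ m * a ^ k = a ^ k" and h2: "(x * a ^ m * a ^ k)\<^sup>\<star> = x * a ^ m * a ^ k"
    and h3: "x ^ 2 * a ^ m * a ^ k = x" using h unfolding ldvcore_inverse_def by auto
  define y where "y = x * a ^ (k + m - 1)"
  have ya: "y * a = x * a ^ m * a ^ k"
    unfolding y_def using k
    by (simp add: mult.assoc power_add[symmetric] power_Suc2[symmetric] add.commute)
  have yy: "y = x ^ 2 * a ^ (k + m - 1 + m) * a ^ k"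
  proof -
    have "y = x ^ 2 * a ^ m * a ^ k * a ^ (k + m - 1)" unfolding y_def using h3 by simp
    also have "\<dots> = x ^ 2 * a ^ (k + m - 1 + m) * a ^ k"
      by (simp add: mult.assoc power_add[symmetric] add.commute add.left_commute,
          simp add: algebra_simps)
    finally show ?thesis .
  qed
  have "y * (y * a) = y"
  proof -
    have "y * (y * a) = x ^ 2 * a ^ (k + m - 1 + m) * (a ^ k * x * a ^ m * a ^ k)"
      using yy ya by (simp add: mult.assoc)
    also have "\<dots> = y" using h1 yy by (simp add: mult.assoc)
    finally show ?thesis .
  qed
  then have "y ^ 2 * a = y" by (simp add: power2_eq_square mult.assoc)
  moreover have "a ^ k * y * a = a ^ k" using ya h1 by (simp add: mult.assoc)
  moreover have "(y * a)\<^sup>\<star> = y * a" using ya h2 by simp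
  ultimately show ?thesis unfolding ldpc_inverse_def y_def[symmetric] using k by blast
qed

theorem proposition3p4:
  fixes a :: "'a::ring_1_inv" and m :: nat
  shows "(ldpc_invertible a \<longleftrightarrow> (\<exists>k::nat. k > 0 \<and> ldvcore_invertible (a ^ k) (a ^ m)))
    \<and> (\<forall>(k::nat) x. k > 0 \<longrightarrow> ldvcore_inverse (a ^ k) (a ^ m) x
          \<longrightarrow> ldpc_inverse a (x * a ^ (k + m - 1)))
    \<and> (\<forall>(k::nat) y. k > 0 \<longrightarrow> a ^ k * y * a = a ^ k \<longrightarrow> (y * a)\<^sup>\<star> = y * a \<longrightarrow> y ^ 2 * a = y
          \<longrightarrow> ldvcore_inverse (a ^ k) (a ^ m) (y ^ (k + m)))"
proof (intro conjI allI impI)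
  show "ldpc_invertible a \<longleftrightarrow> (\<exists>k::nat. k > 0 \<and> ldvcore_invertible (a ^ k) (a ^ m))"
    unfolding ldpc_invertible_def ldvcore_invertible_def
    using part2 part3 unfolding ldpc_inverse_def by metis
qed (blast intro: part2 part3)+

end
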